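(* Let $a_1,a_2,\dots$ and $b_0,b_1,\dots$ be arbitrary sequences of real numbers, let $0<p<1$, and let $J\subset\mathbb{Z}^+$ be a set of indices such that $a_j=0$ for all $j\in J$. Then \[ \sum_{m=1}^\infty\left|\frac{1}{mp}\sum_{k=1}^m b_{m-k}\,k\,a_k\sqrt{B(m,k,p)}\right|^2 \leqslant\left(\sum_{k\in\mathbb{Z}^+\setminus J}p^{k-2}\right)b_0^2\left(\sum_{k=1}^\infty a_k^2\right)+C_J(p)\left(\sum_{k=1}^\infty a_k^2\right)\left(\sum_{j=1}^\infty b_j^2\right). \]
   Context: $\mathbb{Z}^+$ denotes the set of positive integers. $B(m,k,p)=\binom{m}{k}p^k(1-p)^{m-k}$. For $J\subset\mathbb{Z}^+$, $s\in\mathbb{Z}^+$ and $0<p<1$, \[ h_J(s,p)=\frac{(1-p)^s}{p^2}\sum_{k\in\mathbb{Z}^+\setminus J}\frac{k^2}{(k+s)^2}\binom{k+s}{k}p^k,\qquad C_J(p)=\max_{s\in\mathbb{Z}^+}h_J(s,p). \] *)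

theory Defs
  imports Complex_Main "HOL-Library.Extended_Nonnegative_Real"
begin

definition Bin :: "nat \<Rightarrow> nat \<Rightarrow> real \<Rightarrow> real" where
  "Bin m k p = real (m choose k) * p ^ k * (1 - p) ^ (m - k)"

text \<open>h_J(s,p); the series converges for 0<p<1.\<close>
definition hJ :: "nat set \<Rightarrow> nat \<Rightarrow> real \<Rightarrow> real" where
  "hJ J s p = (1 - p) ^ s / p ^ 2 *
     (\<Sum>k. if 1 \<le> k \<and> k \<notin> J
           then real k ^ 2 / real (k + s) ^ 2 * real ((k + s) choose k) * p ^ k else 0)"

text \<open>C_J(p) = max over positive s of h_J(s,p), rendered as a supremum in [0,\<infinity>].\<close>
definition CJ :: "nat set \<Rightarrow> real \<Rightarrow> ennreal" where
  "CJ J p = (SUP s\<in>{s::nat. 1 \<le> s}. ennreal (hJ J s p))"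

end

theory Submission imports Defs "HOL-Analysis.Convex" begin

lemma summable_negbin:
  fixes p :: real assumes "0 < p" "p < 1"
  shows "summable (\<lambda>k. real ((k+s) choose k) * p^k)"
proof (rule summable_ratio_test[where c="(1+p)/2" and N="nat \<lceil>2*s*p/(1-p)\<rceil>"])
  show "(1+p)/2 < 1" using assms by simp
next
  fix n assume n: "nat \<lceil>2*s*p/(1-p)\<rceil> \<le> n"
  have e: "real (Suc n + s choose Suc n) * real (Suc n) = real (Suc (n+s)) * real (n+s choose n)"
    using Suc_times_binomial_eq[of "n+s" n] by (metis add_Suc of_nat_mult)
  have nn: "2*s*p/(1-p) \<le> real n" using n by linarith
  hence "2*s*p \<le> real n * (1-p)" using assms by (simp add: field_simps)
  hence key: "real (Suc (n+s)) * p \<le> (1+p)/2 * real (Suc n)"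
    using assms by (simp add: field_simps) 
  have "real (Suc n + s choose Suc n) = real (Suc (n+s)) * real (n+s choose n) / real (Suc n)"
    using e by (simp add: field_simps)
  hence "norm (real (Suc n + s choose Suc n) * p^Suc n) = real (Suc (n+s)) * p / real (Suc n) * (real (n+s choose n) * p^n)"
    using assms by (simp add: field_simps)
  also have "\<dots> \<le> (1+p)/2 * (real (n+s choose n) * p^n)"
    apply (rule mult_right_mono) using key assms by (auto simp: field_simps)
  also have "\<dots> = (1+p)/2 * norm (real (n+s choose n) * p^n)" using assms by simp
  finally show "norm (real (Suc n + s choose Suc n) * p^Suc n) \<le> (1+p)/2 * norm (real (n+s choose n) * p^n)" .
qed


lemma Bin_nonneg: "0 \<le> p \<Longrightarrow> p \<le> 1 \<Longrightarrow> 0 \<le> Bin m k p"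
  by (simp add: Bin_def)

lemma vsq: assumes "0 < p" "p < 1"
  shows "(real k * sqrt (Bin m k p) / (real m * p))^2 = real k^2 * Bin m k p / (real m ^2 * p^2)"
  using assms Bin_nonneg[of p m k] by (simp add: power_divide power_mult_distrib)

lemma hJ_bound:
  fixes p :: real assumes "0 < p" "p < 1" "1 \<le> s"
  shows "(\<Sum>k\<in>{1..<K}-J. (real k * sqrt (Bin (k+s) k p) / (real (k+s) * p))^2) \<le> hJ J s p"
proof -
  define f where "f = (\<lambda>k. if 1 \<le> k \<and> k \<notin> J
           then real k ^ 2 / real (k + s) ^ 2 * real ((k + s) choose k) * p ^ k else 0)"
  have sf: "summable f"
  proof (rule summable_comparison_test'[OF summable_negbin[OF assms(1,2), of s], where N=0])
    fix n :: nat
    have "real n ^ 2 / real (n + s) ^ 2 \<le> 1"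
      by (simp add: divide_le_eq_1 power_mono)
    hence "real n ^ 2 / real (n + s) ^ 2 * (real ((n + s) choose n) * p ^ n) \<le> 1 * (real ((n + s) choose n) * p ^ n)"
      by (intro mult_right_mono) (use assms in auto)
    thus "norm (f n) \<le> real ((n + s) choose n) * p ^ n"
      using assms unfolding f_def by (auto simp: mult.assoc)
  qed
  have fnn: "0 \<le> f k" for k using assms unfolding f_def by auto
  have "(\<Sum>k\<in>{1..<K}-J. (real k * sqrt (Bin (k+s) k p) / (real (k+s) * p))^2)
      = (\<Sum>k\<in>{1..<K}-J. (1-p)^s/p^2 * (real k ^ 2 / real (k + s) ^ 2 * real ((k + s) choose k) * p ^ k))"
    by (rule sum.cong) (use assms in \<open>auto simp: vsq Bin_def field_simps power2_eq_square\<close>)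
  also have "\<dots> = (1-p)^s/p^2 * (\<Sum>k\<in>{..<K} \<inter> {k. 1 \<le> k \<and> k \<notin> J}. real k ^ 2 / real (k + s) ^ 2 * real ((k + s) choose k) * p ^ k)"
  proof -
    have "{1..<K}-J = {..<K} \<inter> {k. 1 \<le> k \<and> k \<notin> J}" by auto
    thus ?thesis by (simp only: sum_distrib_left)
  qed
  also have "\<dots> = (1-p)^s/p^2 * (\<Sum>k<K. f k)"
    unfolding f_def by (subst sum.inter_restrict) auto
  also have "\<dots> \<le> (1-p)^s/p^2 * suminf f"
    by (rule mult_left_mono[OF sum_le_suminf[OF sf]]) (use assms fnn in auto)
  also have "\<dots> = hJ J s p" unfolding hJ_def f_def ..
  finally show ?thesis .
qed

lemma T0_eq:
  fixes p :: real assumes "0 < p" "p < 1"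
  shows "(\<Sum>k\<in>{1..<K}-J. (real k * sqrt (Bin (k+0) k p) / (real (k+0) * p))^2)
     = (\<Sum>k<K. (if 1 \<le> k \<and> k \<notin> J then p powr (real k - 2) else 0))"
proof -
  have "(\<Sum>k<K. (if 1 \<le> k \<and> k \<notin> J then p powr (real k - 2) else 0))
      = (\<Sum>k\<in>{..<K} \<inter> {k. 1 \<le> k \<and> k \<notin> J}. p powr (real k - 2))"
    by (subst sum.inter_restrict) auto
  also have "{..<K} \<inter> {k. 1 \<le> k \<and> k \<notin> J} = {1..<K}-J" by auto
  finally have e: "(\<Sum>k<K. (if 1 \<le> k \<and> k \<notin> J then p powr (real k - 2) else 0))
      = (\<Sum>k\<in>{1..<K}-J. p powr (real k - 2))" .
  show ?thesis unfolding e
  proof (rule sum.cong)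
    fix k assume k: "k \<in> {1..<K}-J"
    have "p powr (real k - 2) = p powr real k / p powr 2" using assms by (simp add: powr_diff)
    also have "\<dots> = p^k / p^2" using assms by (simp add: powr_realpow)
    finally show "(real k * sqrt (Bin (k+0) k p) / (real (k+0) * p))^2 = p powr (real k - 2)"
      using k assms by (simp add: vsq Bin_def power_divide)
  qed simp
qed

lemma reindex_tri:
  fixes F :: "nat \<Rightarrow> nat \<Rightarrow> real"
  shows "(\<Sum>m<N. \<Sum>k\<in>{1..m}-J. F k (m-k)) = (\<Sum>s<N. \<Sum>k\<in>{1..<N-s}-J. F k s)"
proof -
  have "(\<Sum>m<N. \<Sum>k\<in>{1..m}-J. F k (m-k)) = (\<Sum>(m,k)\<in>Sigma {..<N} (\<lambda>m. {1..m}-J). F k (m-k))"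
    by (rule sum.Sigma) auto
  also have "\<dots> = (\<Sum>(s,k)\<in>Sigma {..<N} (\<lambda>s. {1..<N-s}-J). F k s)"
    by (rule sum.reindex_bij_witness[where i="\<lambda>(s,k). (s+k,k)" and j="\<lambda>(m,k). (m-k,k)"]) auto
  also have "\<dots> = (\<Sum>s<N. \<Sum>k\<in>{1..<N-s}-J. F k s)"
    by (rule sum.Sigma[symmetric]) auto
  finally show ?thesis .
qed

theorem lemma1:
  fixes a b :: "nat \<Rightarrow> real" and p :: real and J :: "nat set"
  assumes "0 < p" and "p < 1"
    and "J \<subseteq> {k. 1 \<le> k}"
    and "\<forall>j\<in>J. a j = 0"
  shows "(\<Sum>m. ennreal (if 1 \<le> m then
            \<bar>1 / (real m * p) * (\<Sum>k=1..m. b (m - k) * real k * a k * sqrt (Bin m k p))\<bar> ^ 2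
          else 0))
    \<le> (\<Sum>k. ennreal (if 1 \<le> k \<and> k \<notin> J then p powr (real k - 2) else 0))
        * ennreal ((b 0)\<^sup>2) * (\<Sum>k. ennreal (if 1 \<le> k then (a k)\<^sup>2 else 0))
      + CJ J p * (\<Sum>k. ennreal (if 1 \<le> k then (a k)\<^sup>2 else 0))
        * (\<Sum>j. ennreal (if 1 \<le> j then (b j)\<^sup>2 else 0))"
proof -
  define A where "A = (\<Sum>k. ennreal (if 1 \<le> k then (a k)\<^sup>2 else 0))"
  define B where "B = (\<Sum>j. ennreal (if 1 \<le> j then (b j)\<^sup>2 else 0))"
  define P where "P = (\<Sum>k. ennreal (if 1 \<le> k \<and> k \<notin> J then p powr (real k - 2) else 0))"
  define C where "C = CJ J p"
  define v where "v = (\<lambda>m k. real k * sqrt (Bin m k p) / (real m * p))"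
  define x where "x = (\<lambda>m. ennreal (if 1 \<le> m then
            \<bar>1 / (real m * p) * (\<Sum>k=1..m. b (m - k) * real k * a k * sqrt (Bin m k p))\<bar> ^ 2
          else 0))"
  define G where "G = (\<lambda>m. \<Sum>k\<in>{1..m}-J. (b (m-k) * v m k)^2)"
  define T where "T = (\<lambda>N s. \<Sum>k\<in>{1..<N-s}-J. (v (k+s) k)^2)"
  have Gnn: "0 \<le> G m" for m unfolding G_def by (auto intro: sum_nonneg)
  have Tnn: "0 \<le> T N s" for N s unfolding T_def by (auto intro: sum_nonneg)
  have step1: "x m \<le> A * ennreal (G m)" for m
  proof (cases "m = 0")
    case True thus ?thesis by (simp add: x_def)
  next
    case False
    have e1: "1 / (real m * p) * (\<Sum>k=1..m. b (m - k) * real k * a k * sqrt (Bin m k p))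
        = (\<Sum>k=1..m. a k * (b (m-k) * v m k))"
      unfolding v_def sum_distrib_left by (rule sum.cong) auto
    also have "\<dots> = (\<Sum>k\<in>{1..m}-J. a k * (b (m-k) * v m k))"
      by (rule sum.mono_neutral_right) (use assms(4) in auto)
    finally have e2: "\<bar>1 / (real m * p) * (\<Sum>k=1..m. b (m - k) * real k * a k * sqrt (Bin m k p))\<bar> ^ 2
        = (\<Sum>k\<in>{1..m}-J. a k * (b (m-k) * v m k))^2" by simp
    have cs: "\<dots> \<le> (\<Sum>k\<in>{1..m}-J. (a k)^2) * G m"
      unfolding G_def by (rule Cauchy_Schwarz_ineq_sum)
    have "(\<Sum>k\<in>{1..m}-J. (a k)^2) \<le> (\<Sum>k\<in>{1..m}. (a k)^2)"
      by (rule sum_mono2) auto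
    also have "\<dots> = (\<Sum>k<Suc m. (if 1 \<le> k then (a k)\<^sup>2 else 0))"
    proof -
      have "{1..m} = {..<Suc m} \<inter> {k. 1 \<le> k}" by auto
      thus ?thesis by (simp add: sum.inter_restrict)
    qed
    finally have "ennreal (\<Sum>k\<in>{1..m}-J. (a k)^2) \<le> ennreal (\<Sum>k<Suc m. (if 1 \<le> k then (a k)\<^sup>2 else 0))"
      by (rule ennreal_leI)
    also have "\<dots> = (\<Sum>k<Suc m. ennreal (if 1 \<le> k then (a k)\<^sup>2 else 0))"
      by (rule sum_ennreal[symmetric]) auto
    also have "\<dots> \<le> A" unfolding A_def by (rule sum_le_suminf) auto
    finally have aA: "ennreal (\<Sum>k\<in>{1..m}-J. (a k)^2) \<le> A" .
    have "x m = ennreal ((\<Sum>k\<in>{1..m}-J. a k * (b (m-k) * v m k))^2)"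
      unfolding x_def using False e2 by simp
    also have "\<dots> \<le> ennreal ((\<Sum>k\<in>{1..m}-J. (a k)^2) * G m)"
      by (rule ennreal_leI[OF cs])
    also have "\<dots> = ennreal (\<Sum>k\<in>{1..m}-J. (a k)^2) * ennreal (G m)"
      by (rule ennreal_mult) (auto intro: sum_nonneg Gnn)
    also have "\<dots> \<le> A * ennreal (G m)"
      by (rule mult_right_mono[OF aA]) simp
    finally show ?thesis .
  qed
  have step2: "(\<Sum>m<N. G m) = (\<Sum>s<N. (b s)^2 * T N s)" for N
  proof -
    have "(\<Sum>m<N. G m) = (\<Sum>m<N. \<Sum>k\<in>{1..m}-J. (\<lambda>k s. (b s * v (k+s) k)^2) k (m-k))"
      unfolding G_def by (intro sum.cong refl) auto
    also have "\<dots> = (\<Sum>s<N. \<Sum>k\<in>{1..<N-s}-J. (b s * v (k+s) k)^2)"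
      by (rule reindex_tri)
    also have "\<dots> = (\<Sum>s<N. (b s)^2 * T N s)"
      unfolding T_def by (simp add: sum_distrib_left power_mult_distrib)
    finally show ?thesis .
  qed
  have step3: "ennreal (\<Sum>s<N. (b s)^2 * T N s) \<le> ennreal ((b 0)^2) * P + C * B" for N
  proof (cases "N = 0")
    case True thus ?thesis by simp
  next
    case False
    have split: "{..<N} = insert 0 {1..<N}" using False by auto
    have "(\<Sum>s<N. (b s)^2 * T N s) = (b 0)^2 * T N 0 + (\<Sum>s\<in>{1..<N}. (b s)^2 * T N s)"
      unfolding split by (subst sum.insert) auto
    hence "ennreal (\<Sum>s<N. (b s)^2 * T N s) = ennreal ((b 0)^2 * T N 0) + ennreal (\<Sum>s\<in>{1..<N}. (b s)^2 * T N s)"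
      by (simp add: ennreal_plus Tnn sum_nonneg)
    also have "\<dots> \<le> ennreal ((b 0)^2) * P + C * B"
    proof (rule add_mono)
      have "T N 0 = (\<Sum>k<N. (if 1 \<le> k \<and> k \<notin> J then p powr (real k - 2) else 0))"
        unfolding T_def v_def using T0_eq[OF assms(1,2), of N J] by simp
      hence "ennreal (T N 0) = (\<Sum>k<N. ennreal (if 1 \<le> k \<and> k \<notin> J then p powr (real k - 2) else 0))"
        by (simp add: sum_ennreal)
      also have "\<dots> \<le> P" unfolding P_def by (rule sum_le_suminf) auto
      finally have "ennreal (T N 0) \<le> P" .
      thus "ennreal ((b 0)^2 * T N 0) \<le> ennreal ((b 0)^2) * P"
        by (simp add: ennreal_mult Tnn mult_left_mono)
    next
      have "ennreal (\<Sum>s\<in>{1..<N}. (b s)^2 * T N s) = (\<Sum>s\<in>{1..<N}. ennreal ((b s)^2) * ennreal (T N s))"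
        by (simp add: sum_ennreal[symmetric] ennreal_mult Tnn)
      also have "\<dots> \<le> (\<Sum>s\<in>{1..<N}. ennreal ((b s)^2) * C)"
      proof (rule sum_mono)
        fix s assume s: "s \<in> {1..<N}"
        have "T N s \<le> hJ J s p"
          unfolding T_def v_def using hJ_bound[OF assms(1,2), of s "N-s" J] s by simp
        hence "ennreal (T N s) \<le> ennreal (hJ J s p)" by (rule ennreal_leI)
        also have "\<dots> \<le> C" unfolding C_def CJ_def by (rule SUP_upper) (use s in auto)
        finally show "ennreal ((b s)^2) * ennreal (T N s) \<le> ennreal ((b s)^2) * C"
          by (rule mult_left_mono) simp
      qed
      also have "\<dots> = C * (\<Sum>s\<in>{1..<N}. ennreal ((b s)^2))"
        by (simp add: sum_distrib_left mult.commute del: sum_ennreal)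
      also have "(\<Sum>s\<in>{1..<N}. ennreal ((b s)^2)) = (\<Sum>j<N. ennreal (if 1 \<le> j then (b j)\<^sup>2 else 0))"
      proof -
        have "{1..<N} = {..<N} \<inter> {k. 1 \<le> k}" by auto
        thus ?thesis by (simp add: sum.inter_restrict del: sum_ennreal) (intro sum.cong refl, simp)
      qed
      also have "C * \<dots> \<le> C * B" unfolding B_def
        by (rule mult_left_mono[OF sum_le_suminf]) auto
      finally show "ennreal (\<Sum>s\<in>{1..<N}. (b s)^2 * T N s) \<le> C * B" .
    qed
    finally show ?thesis .
  qed
  have "suminf x \<le> A * (ennreal ((b 0)^2) * P + C * B)"
  proof (rule suminf_le_const)
    fix N
    have "(\<Sum>m<N. x m) \<le> (\<Sum>m<N. A * ennreal (G m))" by (rule sum_mono) (rule step1)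
    also have "\<dots> = A * ennreal (\<Sum>m<N. G m)"
      by (simp add: sum_distrib_left[symmetric] sum_ennreal Gnn)
    also have "\<dots> \<le> A * (ennreal ((b 0)^2) * P + C * B)"
      unfolding step2 by (rule mult_left_mono[OF step3]) simp
    finally show "(\<Sum>m<N. x m) \<le> A * (ennreal ((b 0)^2) * P + C * B)" .
  qed simp
  also have "\<dots> = P * ennreal ((b 0)^2) * A + C * A * B"
    by (simp add: algebra_simps)
  finally show ?thesis unfolding x_def A_def B_def P_def C_def .
qed

end
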